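(* Let $h_0>0$, $|h|\le h_0$, $U>0$, $k\ne0$, and let $A$ be an element of $\mathfrak A_X$ ($X\subset\Lambda$ finite) regarded as an operator on $\mathcal H^{\rm hf}_\Lambda$, of $D_\Lambda$-grade $k$, i.e. $A=A^{(k)}$ and $\mathrm{ad}_{D_\Lambda}(A)=kA$. Assume $|k|U>h_0|X|$ and define \[ \mathcal I_h(A):=\frac1{kU}\sum_{n\ge0}\Bigl(\frac h{kU}\Bigr)^n\mathrm{ad}_{M_\Lambda}^{\,n}(A). \] Then the series converges absolutely in operator norm and: (i) $\mathrm{ad}_{UD_\Lambda-hM_\Lambda}(\mathcal I_h(A))=A$; (ii) $\mathrm{ad}_{D_\Lambda}(\mathcal I_h(A))=k\,\mathcal I_h(A)$, in particular $(\mathcal I_h(A))^{\rm diag}=0$ and $(\mathcal I_h(A))^{\rm off}=\mathcal I_h(A)$; (iii) $\mathcal I_h(A)\in\mathfrak A_X$; (iv) $\|\mathcal I_h(A)\|\le\frac{1}{|k|U-|h||X|}\|A\|\le\frac1{|k|U-h_0|X|}\|A\|$; (v) $\mathcal I_h(A^* )=-(\mathcal I_h(A))^*$.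
   Context: $\Lambda=(\mathbb Z/L\mathbb Z)^d$, $L\in2\mathbb N$; fermionic Fock space over $\ell^2(\Lambda)\otimes\mathbb C^2$ with CAR operators $c_{x\sigma}$, $n_{x\sigma}=c^*_{x\sigma}c_{x\sigma}$, $n_x=n_{x\uparrow}+n_{x\downarrow}$; half-filled sector $\mathcal H^{\rm hf}_\Lambda=\ker(\sum_xn_x-|\Lambda|)$; $D_\Lambda=\sum_xn_{x\uparrow}n_{x\downarrow}$; $\eta_x=(-1)^{x_1+\dots+x_d}$, $M_\Lambda=\sum_x\eta_x\frac12(n_{x\uparrow}-n_{x\downarrow})$; $\mathfrak A_X$ the algebra generated by $c_{x\sigma},c^*_{x\sigma}$, $x\in X$; $\mathrm{ad}_S(A)=[S,A]$. $P_m$ is the spectral projection of $D_\Lambda$ on $\mathcal H^{\rm hf}_\Lambda$ for eigenvalue $m$ ($P_m=0$ if $m<0$ or not an eigenvalue), $B^{(k)}=\sum_{m\ge0}P_{m+k}BP_m$, $B^{\rm diag}=B^{(0)}$, $B^{\rm off}=\sum_{k\ne0}B^{(k)}$. *)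

theory Defs
  imports "HOL-Analysis.Analysis" "HOL-Library.Function_Algebras"
    "HOL-Library.List_Lexorder"
begin

text \<open>Sites of the torus (Z/LZ)^d are lists of length d with entries in {0..<L}.
  A mode is a pair (site, spin) with spin True = up, False = down.
  The fermionic Fock space over l2(Lambda) x C^2 is realised concretely in its
  occupation-number basis: basis vectors are indexed by configurations,
  i.e. sets of occupied modes.  Operators are matrices indexed by configurations
  (entries outside the configuration set are irrelevant and kept zero).\<close>

type_synonym site = "nat list"
type_synonym mode = "site \<times> bool"
type_synonym cfg = "mode set"
type_synonym op = "cfg \<Rightarrow> cfg \<Rightarrow> complex"

definition Lam :: "nat \<Rightarrow> nat \<Rightarrow> site set" where
  "Lam d L = {x. length x = d \<and> (\<forall>i\<in>set x. i < L)}"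

definition modes :: "nat \<Rightarrow> nat \<Rightarrow> mode set" where
  "modes d L = Lam d L \<times> (UNIV :: bool set)"

definition cfgs :: "nat \<Rightarrow> nat \<Rightarrow> cfg set" where
  "cfgs d L = Pow (modes d L)"

definition opmul :: "cfg set \<Rightarrow> op \<Rightarrow> op \<Rightarrow> op" where
  "opmul F A B = (\<lambda>S T. \<Sum>R\<in>F. A S R * B R T)"

definition opscale :: "complex \<Rightarrow> op \<Rightarrow> op" where
  "opscale c A = (\<lambda>S T. c * A S T)"

definition idop :: "cfg set \<Rightarrow> op" where
  "idop F = (\<lambda>S T. if S = T \<and> S \<in> F then 1 else 0)"

definition adj :: "op \<Rightarrow> op" where
  "adj A = (\<lambda>S T. cnj (A T S))"

definition ad :: "cfg set \<Rightarrow> op \<Rightarrow> op \<Rightarrow> op" where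
  "ad F S A = opmul F S A - opmul F A S"

definition opnorm :: "cfg set \<Rightarrow> op \<Rightarrow> real" where
  "opnorm V B = Sup ((\<lambda>v. sqrt (\<Sum>S\<in>V. (cmod (\<Sum>T\<in>V. B S T * v T))\<^sup>2))
                     ` {v. (\<Sum>T\<in>V. (cmod (v T))\<^sup>2) \<le> 1})"

text \<open>Fixed total order on modes used for the Jordan-Wigner signs:
  lexicographic on (site, spin).\<close>
definition mode_less :: "mode \<Rightarrow> mode \<Rightarrow> bool" where
  "mode_less m m' = (fst m < fst m' \<or> (fst m = fst m' \<and> snd m < snd m'))"

text \<open>CAR annihilation operators (Jordan-Wigner sign w.r.t. the lexicographic
  order on modes): c_m |T> = (-1)^{#{m' in T. m' < m}} |T - {m}> if m in T, else 0.\<close>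
definition cop :: "nat \<Rightarrow> nat \<Rightarrow> mode \<Rightarrow> op" where
  "cop d L m = (\<lambda>S T. if T \<in> cfgs d L \<and> m \<in> modes d L \<and> m \<in> T \<and> S = T - {m}
                     then (-1) ^ card {m'\<in>T. mode_less m' m} else 0)"

definition nop :: "nat \<Rightarrow> nat \<Rightarrow> mode \<Rightarrow> op" where
  "nop d L m = opmul (cfgs d L) (adj (cop d L m)) (cop d L m)"

definition Dop :: "nat \<Rightarrow> nat \<Rightarrow> op" where
  "Dop d L = (\<Sum>x\<in>Lam d L. opmul (cfgs d L) (nop d L (x, True)) (nop d L (x, False)))"

definition eta :: "site \<Rightarrow> complex" where
  "eta x = (-1) ^ sum_list x"

definition Mop :: "nat \<Rightarrow> nat \<Rightarrow> op" where
  "Mop d L = (\<Sum>x\<in>Lam d L. opscale (eta x / 2) (nop d L (x, True) - nop d L (x, False)))"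

inductive_set alg :: "nat \<Rightarrow> nat \<Rightarrow> site set \<Rightarrow> op set" for d L X where
  gen_c: "x \<in> X \<Longrightarrow> cop d L (x, s) \<in> alg d L X"
| gen_cstar: "x \<in> X \<Longrightarrow> adj (cop d L (x, s)) \<in> alg d L X"
| unit: "idop (cfgs d L) \<in> alg d L X"
| add: "A \<in> alg d L X \<Longrightarrow> B \<in> alg d L X \<Longrightarrow> A + B \<in> alg d L X"
| scale: "A \<in> alg d L X \<Longrightarrow> opscale c A \<in> alg d L X"
| mult: "A \<in> alg d L X \<Longrightarrow> B \<in> alg d L X \<Longrightarrow> opmul (cfgs d L) A B \<in> alg d L X"

text \<open>Half-filled sector: the basis configurations with total particle number |Lambda|
  (these span ker(N - |Lambda|)).  hfop B = Q B Q is B regarded as an operator on it.\<close>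
definition hfcfgs :: "nat \<Rightarrow> nat \<Rightarrow> cfg set" where
  "hfcfgs d L = {S \<in> cfgs d L. card S = card (Lam d L)}"

definition hfop :: "nat \<Rightarrow> nat \<Rightarrow> op \<Rightarrow> op" where
  "hfop d L B = (\<lambda>S T. if S \<in> hfcfgs d L \<and> T \<in> hfcfgs d L then B S T else 0)"

text \<open>Spectral projection P_m of D on the half-filled sector (D is diagonal in
  the configuration basis), the set of its eigenvalues there, and the grading.\<close>
definition Dspec :: "nat \<Rightarrow> nat \<Rightarrow> int set" where
  "Dspec d L = {m. 0 \<le> m \<and> (\<exists>S\<in>hfcfgs d L. Dop d L S S = of_int m)}"

definition Pproj :: "nat \<Rightarrow> nat \<Rightarrow> int \<Rightarrow> op" where
  "Pproj d L m = (\<lambda>S T. if S = T \<and> S \<in> hfcfgs d L \<and> 0 \<le> m \<and> Dop d L S S = of_int m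
                         then 1 else 0)"

definition grade :: "nat \<Rightarrow> nat \<Rightarrow> int \<Rightarrow> op \<Rightarrow> op" where
  "grade d L k B = (\<Sum>m\<in>Dspec d L.
      opmul (cfgs d L) (Pproj d L (m + k)) (opmul (cfgs d L) B (Pproj d L m)))"

definition diagpart :: "nat \<Rightarrow> nat \<Rightarrow> op \<Rightarrow> op" where
  "diagpart d L B = grade d L 0 B"

definition offpart :: "nat \<Rightarrow> nat \<Rightarrow> op \<Rightarrow> op" where
  "offpart d L B = (\<Sum>k\<in>{a - b | a b. a \<in> Dspec d L \<and> b \<in> Dspec d L} - {0}. grade d L k B)"

text \<open>I_h(B) = 1/(kU) sum_n (h/(kU))^n ad_M^n(B), with M regarded on the half-filled
  sector; the series is taken entrywise.\<close>
definition Iterm :: "nat \<Rightarrow> nat \<Rightarrow> int \<Rightarrow> real \<Rightarrow> real \<Rightarrow> op \<Rightarrow> nat \<Rightarrow> op" where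
  "Iterm d L k h U B n = opscale (complex_of_real (1 / (real_of_int k * U) * (h / (real_of_int k * U)) ^ n))
       ((ad (cfgs d L) (hfop d L (Mop d L)) ^^ n) B)"

definition Ih :: "nat \<Rightarrow> nat \<Rightarrow> int \<Rightarrow> real \<Rightarrow> real \<Rightarrow> op \<Rightarrow> op" where
  "Ih d L k h U B = (\<lambda>S T. \<Sum>n. Iterm d L k h U B n S T)"

end

theory Submission
  imports Defs
begin


lemma sum_op_apply: "(\<Sum>x\<in>A. (f x :: op)) S T = (\<Sum>x\<in>A. f x S T)"
  by (induction A rule: infinite_finite_induct) auto

definition diagop :: "cfg set \<Rightarrow> (cfg \<Rightarrow> complex) \<Rightarrow> op" where
  "diagop F f = (\<lambda>S T. if S = T \<and> S \<in> F then f S else 0)"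

lemma finite_Lam: "finite (Lam d L)"
proof -
  have "Lam d L = {xs. set xs \<subseteq> {0..<L} \<and> length xs = d}"
    unfolding Lam_def by auto
  then show ?thesis using finite_lists_length_eq[of "{0..<L}" d] by simp
qed

lemma finite_modes: "finite (modes d L)"
  unfolding modes_def using finite_Lam by simp

lemma finite_cfgs: "finite (cfgs d L)"
  unfolding cfgs_def using finite_modes by simp

lemma hf_sub: "hfcfgs d L \<subseteq> cfgs d L"
  unfolding hfcfgs_def by auto

lemma finite_hf: "finite (hfcfgs d L)"
  using finite_subset[OF hf_sub finite_cfgs] .

lemma modes_mem[simp]: "((x,b) \<in> modes d L) = (x \<in> Lam d L)"
  unfolding modes_def by auto

lemma opmul_diag_left:
  assumes "finite F'" "F \<subseteq> F'"
  shows "opmul F' (diagop F f) B S T = (if S \<in> F then f S * B S T else 0)"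
proof -
  have "opmul F' (diagop F f) B S T = (\<Sum>R\<in>F'. if R = S then (if S \<in> F then f S * B S T else 0) else 0)"
    unfolding opmul_def diagop_def by (intro sum.cong) auto
  also have "\<dots> = (if S \<in> F then f S * B S T else 0)"
    using assms by (auto simp: sum.delta')
  finally show ?thesis .
qed

lemma opmul_diag_right:
  assumes "finite F'" "F \<subseteq> F'"
  shows "opmul F' B (diagop F f) S T = (if T \<in> F then B S T * f T else 0)"
proof -
  have "opmul F' B (diagop F f) S T = (\<Sum>R\<in>F'. if R = T then (if T \<in> F then B S T * f T else 0) else 0)"
    unfolding opmul_def diagop_def by (intro sum.cong) auto
  also have "\<dots> = (if T \<in> F then B S T * f T else 0)"
    using assms by (auto simp: sum.delta')
  finally show ?thesis .
qed

lemma nop_eq: "nop d L m = diagop (cfgs d L) (\<lambda>S. if m \<in> modes d L \<and> m \<in> S then 1 else 0)"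
proof (intro ext)
  fix S T
  let ?c = "cop d L m"
  have "nop d L m S T = (\<Sum>R\<in>cfgs d L. cnj (?c R S) * ?c R T)"
    unfolding nop_def opmul_def adj_def by simp
  also have "\<dots> = (\<Sum>R\<in>cfgs d L. if R = S - {m} then
        (if S \<in> cfgs d L \<and> m \<in> modes d L \<and> m \<in> S then cnj (?c R S) * ?c R T else 0) else 0)"
    by (intro sum.cong) (auto simp: cop_def)
  also have "\<dots> = (if S \<in> cfgs d L \<and> m \<in> modes d L \<and> m \<in> S then cnj (?c (S - {m}) S) * ?c (S - {m}) T else 0)"
  proof -
    have "S \<in> cfgs d L \<Longrightarrow> S - {m} \<in> cfgs d L" unfolding cfgs_def by auto
    then show ?thesis by (auto simp: sum.delta' finite_cfgs)
  qed
  also have "\<dots> = diagop (cfgs d L) (\<lambda>S. if m \<in> modes d L \<and> m \<in> S then 1 else 0) S T"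
  proof -
    have e: "m \<in> S \<Longrightarrow> m \<in> T \<Longrightarrow> S - {m} = T - {m} \<Longrightarrow> S = T" by blast
    have sq: "cnj ((-1::complex) ^ n) * (-1) ^ n = 1" for n :: nat
      by (simp flip: power_mult_distrib)
    show ?thesis unfolding diagop_def cop_def
      using e by (auto simp: sq)
  qed
  finally show "nop d L m S T = diagop (cfgs d L) (\<lambda>S. if m \<in> modes d L \<and> m \<in> S then 1 else 0) S T" .
qed



definition dcount :: "nat \<Rightarrow> nat \<Rightarrow> cfg \<Rightarrow> nat" where
  "dcount d L S = card {x\<in>Lam d L. (x,True)\<in>S \<and> (x,False)\<in>S}"

definition mur :: "site set \<Rightarrow> cfg \<Rightarrow> real" where
  "mur Y S = (\<Sum>x\<in>Y. (-1) ^ sum_list x / 2 * ((if (x,True)\<in>S then 1 else 0) - (if (x,False)\<in>S then 1 else 0)))"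

lemma opmul_diag_diag:
  assumes "finite F'" "F \<subseteq> F'"
  shows "opmul F' (diagop F f) (diagop F g) = diagop F (\<lambda>S. f S * g S)"
  apply (intro ext)
  apply (subst opmul_diag_left[OF assms])
  apply (simp add: diagop_def)
  done

lemma Dop_eq: "Dop d L = diagop (cfgs d L) (\<lambda>S. of_nat (dcount d L S))"
proof (intro ext)
  fix S T
  have "Dop d L S T = (\<Sum>x\<in>Lam d L. diagop (cfgs d L) (\<lambda>S. 
       (if (x,True)\<in>S \<and> (x,False)\<in>S then 1 else 0)) S T)"
    unfolding Dop_def sum_op_apply nop_eq opmul_diag_diag[OF finite_cfgs order_refl]
    by (intro sum.cong refl) (auto simp: diagop_def)
  also have "\<dots> = diagop (cfgs d L) (\<lambda>S. of_nat (dcount d L S)) S T"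
    unfolding diagop_def dcount_def
    by (cases "S = T"; cases "S \<in> cfgs d L") (auto simp: sum.inter_filter[symmetric] finite_Lam)
  finally show "Dop d L S T = diagop (cfgs d L) (\<lambda>S. of_nat (dcount d L S)) S T" .
qed

lemma Mop_eq: "Mop d L = diagop (cfgs d L) (\<lambda>S. of_real (mur (Lam d L) S))"
proof (intro ext)
  fix S T
  have "Mop d L S T = (\<Sum>x\<in>Lam d L. diagop (cfgs d L) (\<lambda>S. 
       of_real ((-1) ^ sum_list x / 2 * ((if (x,True)\<in>S then 1 else 0) - (if (x,False)\<in>S then 1 else 0)))) S T)"
    unfolding Mop_def sum_op_apply nop_eq
    by (intro sum.cong refl) (auto simp: opscale_def diagop_def eta_def)
  also have "\<dots> = diagop (cfgs d L) (\<lambda>S. of_real (mur (Lam d L) S)) S T"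
    unfolding diagop_def mur_def by (cases "S = T"; cases "S \<in> cfgs d L") simp_all
  finally show "Mop d L S T = diagop (cfgs d L) (\<lambda>S. of_real (mur (Lam d L) S)) S T" .
qed

lemma hfop_diag: "hfcfgs d L \<subseteq> F \<Longrightarrow> hfop d L (diagop F f) = diagop (hfcfgs d L) f"
  unfolding hfop_def diagop_def by (intro ext) auto

definition loc :: "nat \<Rightarrow> nat \<Rightarrow> site set \<Rightarrow> op \<Rightarrow> bool" where
  "loc d L X B = (\<forall>S T. B S T \<noteq> 0 \<longrightarrow> S \<in> cfgs d L \<and> T \<in> cfgs d L \<and> S - X \<times> UNIV = T - X \<times> UNIV)"

lemma alg_loc: "A \<in> alg d L X \<Longrightarrow> loc d L X A"
proof (induction rule: alg.induct)
  case (gen_c x s)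
  then show ?case unfolding loc_def cop_def cfgs_def by auto
next
  case (gen_cstar x s)
  then show ?case unfolding loc_def cop_def cfgs_def adj_def by auto
next
  case unit
  then show ?case unfolding loc_def idop_def by auto
next
  case (add A B)
  then show ?case unfolding loc_def by (metis add.right_neutral plus_fun_def)
next
  case (scale A c)
  then show ?case unfolding loc_def opscale_def by auto
next
  case (mult A B)
  show ?case unfolding loc_def
  proof (intro allI impI)
    fix S T assume "opmul (cfgs d L) A B S T \<noteq> 0"
    then obtain R where "A S R * B R T \<noteq> 0" unfolding opmul_def
      by (meson sum.neutral)
    then show "S \<in> cfgs d L \<and> T \<in> cfgs d L \<and> S - X \<times> UNIV = T - X \<times> UNIV"
      using mult.IH unfolding loc_def by (metis mult_eq_0_iff)
  qed
qed

lemma mur_split: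
  assumes "X \<subseteq> Lam d L" "S - X \<times> UNIV = T - X \<times> UNIV"
  shows "mur (Lam d L) S - mur (Lam d L) T = mur X S - mur X T"
proof -
  let ?t = "\<lambda>S x. (-1::real) ^ sum_list x / 2 * ((if (x,True)\<in>S then 1 else 0) - (if (x,False)\<in>S then 1 else 0))"
  have "mur (Lam d L) S - mur (Lam d L) T = (\<Sum>x\<in>Lam d L. ?t S x - ?t T x)"
    unfolding mur_def by (simp add: sum_subtractf)
  also have "\<dots> = (\<Sum>x\<in>Lam d L - X. ?t S x - ?t T x) + (\<Sum>x\<in>X. ?t S x - ?t T x)"
    using sum.subset_diff[OF assms(1) finite_Lam] .
  also have "(\<Sum>x\<in>Lam d L - X. ?t S x - ?t T x) = 0"
  proof (intro sum.neutral ballI)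
    fix x assume "x \<in> Lam d L - X"
    then have "((x,b) \<in> S) = ((x,b) \<in> T)" for b using assms(2) by blast
    then show "?t S x - ?t T x = 0" by simp
  qed
  finally show ?thesis unfolding mur_def by (simp add: sum_subtractf)
qed

lemma mur_bound: "finite X \<Longrightarrow> \<bar>mur X S\<bar> \<le> real (card X) / 2"
proof -
  assume f: "finite X"
  have "\<bar>mur X S\<bar> \<le> (\<Sum>x\<in>X. \<bar>(-1::real) ^ sum_list x / 2 * ((if (x,True)\<in>S then 1 else 0) - (if (x,False)\<in>S then 1 else 0))\<bar>)"
    unfolding mur_def by (rule sum_abs)
  also have "\<dots> \<le> (\<Sum>x\<in>X. 1/2)"
    by (intro sum_mono) (auto simp: abs_mult power_abs)
  finally show ?thesis by simp
qed

lemma mur_diff_bound: "finite X \<Longrightarrow> \<bar>mur X S - mur X T\<bar> \<le> real (card X)"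
  using mur_bound[of X S] mur_bound[of X T] by linarith



lemma hfM: "hfop d L (Mop d L) = diagop (hfcfgs d L) (\<lambda>S. of_real (mur (Lam d L) S))"
  unfolding Mop_eq by (rule hfop_diag[OF hf_sub])

lemma hfD: "hfop d L (Dop d L) = diagop (hfcfgs d L) (\<lambda>S. of_nat (dcount d L S))"
  unfolding Dop_eq by (rule hfop_diag[OF hf_sub])

lemma ad_diag:
  assumes "finite F'" "F \<subseteq> F'"
  shows "ad F' (diagop F f) B S T = ((if S \<in> F then f S else 0) - (if T \<in> F then f T else 0)) * B S T"
  unfolding ad_def fun_diff_def
  by (simp add: opmul_diag_left[OF assms] opmul_diag_right[OF assms] algebra_simps)

lemma ad_diag_pow:
  assumes "finite F'" "F \<subseteq> F'"
  shows "(ad F' (diagop F f) ^^ n) B S T = ((if S \<in> F then f S else 0) - (if T \<in> F then f T else 0)) ^ n * B S T"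
  by (induction n arbitrary: S T) (simp_all add: ad_diag[OF assms])

lemma hfop_supp: "hfop d L A S T \<noteq> 0 \<Longrightarrow> S \<in> hfcfgs d L \<and> T \<in> hfcfgs d L"
  unfolding hfop_def by (auto split: if_splits)

lemma geom_entry:
  fixes K h D :: real and a :: complex
  assumes "K \<noteq> 0" "\<bar>h * D\<bar> < \<bar>K\<bar>"
  shows "(\<lambda>n. complex_of_real (1 / K * (h / K) ^ n) * (of_real D) ^ n * a) sums (a / of_real (K - h * D))"
proof -
  let ?w = "complex_of_real (h * D / K)"
  have nw: "norm ?w < 1"
  proof -
    have "norm ?w = \<bar>h * D\<bar> / \<bar>K\<bar>" by (simp only: norm_of_real abs_divide)
    also have "\<dots> < 1" using assms by simp
    finally show ?thesis .
  qed
  have s1: "(\<lambda>n. (complex_of_real (1 / K) * a) * ?w ^ n) sums ((complex_of_real (1 / K) * a) * (1 / (1 - ?w)))"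
    by (intro sums_mult geometric_sums nw)
  moreover have e1: "(\<lambda>n. (complex_of_real (1 / K) * a) * ?w ^ n) = (\<lambda>n. complex_of_real (1 / K * (h / K) ^ n) * (of_real D) ^ n * a)"
    by (intro ext) (simp add: power_mult_distrib power_divide algebra_simps)
  moreover have "K - h * D \<noteq> 0" using assms by (auto simp: abs_mult)
  then have e2: "(complex_of_real (1 / K) * a) * (1 / (1 - ?w)) = a / of_real (K - h * D)"
  proof -
    assume ne: "K - h * D \<noteq> 0"
    have "1 - ?w = of_real ((K - h * D) / K)" using assms by (simp add: field_simps)
    then show ?thesis using ne assms(1) by (simp add: field_simps)
  qed
  ultimately show ?thesis using s1 unfolding e1 e2 by simp
qed

definition den :: "nat \<Rightarrow> nat \<Rightarrow> int \<Rightarrow> real \<Rightarrow> real \<Rightarrow> cfg \<Rightarrow> cfg \<Rightarrow> real" where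
  "den d L k h U S T = real_of_int k * U - h * (mur (Lam d L) S - mur (Lam d L) T)"

lemma loc_Delta:
  assumes "loc d L X A" "X \<subseteq> Lam d L" "A S T \<noteq> 0"
  shows "\<bar>mur (Lam d L) S - mur (Lam d L) T\<bar> \<le> real (card X)"
    and "mur (Lam d L) S - mur (Lam d L) T = mur X S - mur X T"
proof -
  have "S - X \<times> UNIV = T - X \<times> UNIV" using assms unfolding loc_def by blast
  then have e: "mur (Lam d L) S - mur (Lam d L) T = mur X S - mur X T"
    using mur_split[OF assms(2)] by blast
  then show "mur (Lam d L) S - mur (Lam d L) T = mur X S - mur X T" .
  have "finite X" using assms(2) finite_Lam finite_subset by blast
  then show "\<bar>mur (Lam d L) S - mur (Lam d L) T\<bar> \<le> real (card X)"
    using e mur_diff_bound by metis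
qed

lemma den_bound:
  assumes "loc d L X A" "X \<subseteq> Lam d L" "A S T \<noteq> 0"
    and "\<bar>h\<bar> * real (card X) < real_of_int \<bar>k\<bar> * U" "U > 0"
  shows "\<bar>h * (mur (Lam d L) S - mur (Lam d L) T)\<bar> < \<bar>real_of_int k * U\<bar>"
proof -
  have "\<bar>h * (mur (Lam d L) S - mur (Lam d L) T)\<bar> \<le> \<bar>h\<bar> * real (card X)"
    using loc_Delta(1)[OF assms(1-3)] by (simp add: abs_mult mult_left_mono)
  also have "\<dots> < \<bar>real_of_int k * U\<bar>" using assms(4,5) by (simp add: abs_mult)
  finally show ?thesis .
qed

lemma Ih_sums:
  assumes "loc d L X A" "X \<subseteq> Lam d L" "k \<noteq> 0" "U > 0"
    and "\<bar>h\<bar> * real (card X) < real_of_int \<bar>k\<bar> * U"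
  shows "(\<lambda>n. Iterm d L k h U (hfop d L A) n S T) sums
     (if S \<in> hfcfgs d L \<and> T \<in> hfcfgs d L then A S T / of_real (den d L k h U S T) else 0)"
proof (cases "S \<in> hfcfgs d L \<and> T \<in> hfcfgs d L \<and> A S T \<noteq> 0")
  case True
  have "(\<lambda>n. complex_of_real (1 / (real_of_int k * U) * (h / (real_of_int k * U)) ^ n) *
      (of_real (mur (Lam d L) S - mur (Lam d L) T)) ^ n * A S T) sums (A S T / of_real (den d L k h U S T))"
    unfolding den_def
    by (rule geom_entry) (use assms True den_bound[OF assms(1,2) _ assms(5,4)] in auto)
  moreover have "(\<lambda>n. Iterm d L k h U (hfop d L A) n S T) = (\<lambda>n. complex_of_real (1 / (real_of_int k * U) * (h / (real_of_int k * U)) ^ n) *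
      (of_real (mur (Lam d L) S - mur (Lam d L) T)) ^ n * A S T)"
    unfolding Iterm_def hfM opscale_def
    by (intro ext) (simp add: ad_diag_pow[OF finite_cfgs hf_sub] True hfop_def)
  ultimately show ?thesis using True by simp
next
  case False
  have "(\<lambda>n. Iterm d L k h U (hfop d L A) n S T) = (\<lambda>n. 0)"
    unfolding Iterm_def hfM opscale_def
    by (intro ext) (use False in \<open>simp add: ad_diag_pow[OF finite_cfgs hf_sub] hfop_def\<close>)
  then show ?thesis using False by auto
qed

lemma Ih_entry:
  assumes "loc d L X A" "X \<subseteq> Lam d L" "k \<noteq> 0" "U > 0"
    and "\<bar>h\<bar> * real (card X) < real_of_int \<bar>k\<bar> * U"
  shows "Ih d L k h U (hfop d L A) S T =
     (if S \<in> hfcfgs d L \<and> T \<in> hfcfgs d L then A S T / of_real (den d L k h U S T) else 0)"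
  unfolding Ih_def using Ih_sums[OF assms] by (simp add: sums_iff)



lemma Dk:
  assumes hyp: "ad (cfgs d L) (hfop d L (Dop d L)) (hfop d L A) = opscale (of_int k) (hfop d L A)"
    and "S \<in> hfcfgs d L" "T \<in> hfcfgs d L" "A S T \<noteq> 0"
  shows "int (dcount d L S) - int (dcount d L T) = k"
proof -
  have "ad (cfgs d L) (hfop d L (Dop d L)) (hfop d L A) S T = opscale (of_int k) (hfop d L A) S T"
    using hyp by simp
  then have "(of_nat (dcount d L S) - of_nat (dcount d L T)) * A S T = of_int k * A S T"
    unfolding hfD ad_diag[OF finite_cfgs hf_sub] opscale_def using assms(2-3) by (simp add: hfop_def)
  then have "(of_nat (dcount d L S) - of_nat (dcount d L T) :: complex) = of_int k"
    using assms(4) by simp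
  then have "(of_int (int (dcount d L S) - int (dcount d L T)) :: complex) = of_int k"
    by simp
  then show ?thesis using of_int_eq_iff by blast
qed

lemma loc_adj: "loc d L X A \<Longrightarrow> loc d L X (adj A)"
  unfolding loc_def adj_def by (metis complex_cnj_zero)

lemma Pproj_eq: "Pproj d L m = diagop (hfcfgs d L) (\<lambda>S. if 0 \<le> m \<and> int (dcount d L S) = m then 1 else 0)"
proof (intro ext)
  fix S T
  have "S \<in> hfcfgs d L \<Longrightarrow> (Dop d L S S = of_int m) = (int (dcount d L S) = m)"
  proof -
    assume "S \<in> hfcfgs d L"
    then have "Dop d L S S = of_int (int (dcount d L S))" using hf_sub unfolding Dop_eq diagop_def by auto
    then show ?thesis by (metis of_int_eq_iff)
  qed
  then show "Pproj d L m S T = diagop (hfcfgs d L) (\<lambda>S. if 0 \<le> m \<and> int (dcount d L S) = m then 1 else 0) S T"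
    unfolding Pproj_def diagop_def by auto
qed

lemma Dspec_sub: "Dspec d L \<subseteq> (\<lambda>S. int (dcount d L S)) ` hfcfgs d L"
proof
  fix m assume "m \<in> Dspec d L"
  then obtain S where S: "S \<in> hfcfgs d L" "Dop d L S S = of_int m" unfolding Dspec_def by auto
  then have "S \<in> cfgs d L" using hf_sub by blast
  then have "Dop d L S S = of_int (int (dcount d L S))" unfolding Dop_eq diagop_def by simp
  then have "m = int (dcount d L S)" using S(2) by (metis of_int_eq_iff)
  then show "m \<in> (\<lambda>S. int (dcount d L S)) ` hfcfgs d L" using S(1) by blast
qed

lemma finite_Dspec: "finite (Dspec d L)"
  using finite_subset[OF Dspec_sub] finite_hf by blast

lemma dcount_Dspec: "S \<in> hfcfgs d L \<Longrightarrow> int (dcount d L S) \<in> Dspec d L"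
  using hf_sub unfolding Dspec_def Dop_eq diagop_def by auto

lemma grade_entry:
  "grade d L k' B S T = (if S \<in> hfcfgs d L \<and> T \<in> hfcfgs d L \<and> int (dcount d L S) = int (dcount d L T) + k' then B S T else 0)"
proof -
  have "grade d L k' B S T = (\<Sum>m\<in>Dspec d L. if m = int (dcount d L T) then
     (if S \<in> hfcfgs d L \<and> T \<in> hfcfgs d L \<and> int (dcount d L S) = int (dcount d L T) + k' then B S T else 0) else 0)"
    unfolding grade_def sum_op_apply Pproj_eq
    by (intro sum.cong refl)
       (auto simp: opmul_diag_left[OF finite_cfgs hf_sub] opmul_diag_right[OF finite_cfgs hf_sub])
  also have "\<dots> = (if S \<in> hfcfgs d L \<and> T \<in> hfcfgs d L \<and> int (dcount d L S) = int (dcount d L T) + k' then B S T else 0)"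
    using dcount_Dspec[of T d L] by (auto simp: sum.delta' finite_Dspec)
  finally show ?thesis .
qed



context
  fixes d L :: nat and X :: "site set" and h U :: real and k :: int and A :: op
  assumes XL: "X \<subseteq> Lam d L" and k0: "k \<noteq> 0" and U0: "U > 0" and lA: "loc d L X A"
    and hypD: "ad (cfgs d L) (hfop d L (Dop d L)) (hfop d L A) = opscale (of_int k) (hfop d L A)"
    and hb: "\<bar>h\<bar> * real (card X) < real_of_int \<bar>k\<bar> * U"
begin

lemma IhE: "Ih d L k h U (hfop d L A) S T =
     (if S \<in> hfcfgs d L \<and> T \<in> hfcfgs d L then A S T / of_real (den d L k h U S T) else 0)"
  by (rule Ih_entry[OF lA XL k0 U0 hb])

lemma den_nz: "A S T \<noteq> 0 \<Longrightarrow> den d L k h U S T \<noteq> 0"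
  using den_bound[OF lA XL _ hb U0, of S T] unfolding den_def by auto

lemma Ih_supp: "Ih d L k h U (hfop d L A) S T \<noteq> 0 \<Longrightarrow> S \<in> hfcfgs d L \<and> T \<in> hfcfgs d L \<and> A S T \<noteq> 0"
  unfolding IhE by (auto split: if_splits)

lemma conj_i:
  "ad (cfgs d L) (opscale (of_real U) (hfop d L (Dop d L)) - opscale (of_real h) (hfop d L (Mop d L)))
          (Ih d L k h U (hfop d L A)) = hfop d L A"
proof -
  have e: "opscale (of_real U) (hfop d L (Dop d L)) - opscale (of_real h) (hfop d L (Mop d L))
      = diagop (hfcfgs d L) (\<lambda>S. of_real U * of_nat (dcount d L S) - of_real h * of_real (mur (Lam d L) S))"
    unfolding hfD hfM by (intro ext) (auto simp: opscale_def diagop_def)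
  show ?thesis
  proof (intro ext)
    fix S T
    show "ad (cfgs d L) (opscale (of_real U) (hfop d L (Dop d L)) - opscale (of_real h) (hfop d L (Mop d L)))
          (Ih d L k h U (hfop d L A)) S T = hfop d L A S T"
    proof (cases "S \<in> hfcfgs d L \<and> T \<in> hfcfgs d L \<and> A S T \<noteq> 0")
      case True
      have dk: "of_nat (dcount d L S) - of_nat (dcount d L T) = (of_int k :: complex)"
        using Dk[OF hypD] True by (metis of_int_of_nat_eq of_int_diff)
      have "(of_real U * of_nat (dcount d L S) - of_real h * of_real (mur (Lam d L) S)) -
            (of_real U * of_nat (dcount d L T) - of_real h * of_real (mur (Lam d L) T))
          = of_real U * (of_nat (dcount d L S) - of_nat (dcount d L T)) - of_real h * (of_real (mur (Lam d L) S) - of_real (mur (Lam d L) T))"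
        by (simp add: algebra_simps)
      also have "\<dots> = complex_of_real (den d L k h U S T)"
        unfolding dk den_def by simp
      finally have f: "(of_real U * of_nat (dcount d L S) - of_real h * of_real (mur (Lam d L) S)) -
            (of_real U * of_nat (dcount d L T) - of_real h * of_real (mur (Lam d L) T)) = complex_of_real (den d L k h U S T)" .
      show ?thesis unfolding e ad_diag[OF finite_cfgs hf_sub] IhE
        using True f den_nz[of S T] by (simp add: hfop_def)
    next
      case False
      then show ?thesis unfolding e ad_diag[OF finite_cfgs hf_sub] IhE
        by (auto simp: hfop_def)
    qed
  qed
qed

lemma conj_ii:
  "ad (cfgs d L) (hfop d L (Dop d L)) (Ih d L k h U (hfop d L A))
          = opscale (of_int k) (Ih d L k h U (hfop d L A))"
proof (intro ext)
  fix S T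
  show "ad (cfgs d L) (hfop d L (Dop d L)) (Ih d L k h U (hfop d L A)) S T
          = opscale (of_int k) (Ih d L k h U (hfop d L A)) S T"
  proof (cases "Ih d L k h U (hfop d L A) S T = 0")
    case True
    then show ?thesis unfolding hfD ad_diag[OF finite_cfgs hf_sub] opscale_def by simp
  next
    case False
    note s = Ih_supp[OF False]
    have dk: "of_nat (dcount d L S) - of_nat (dcount d L T) = (of_int k :: complex)"
      using Dk[OF hypD] s by (metis of_int_of_nat_eq of_int_diff)
    show ?thesis unfolding hfD ad_diag[OF finite_cfgs hf_sub] opscale_def using s dk by simp
  qed
qed

lemma conj_diag: "diagpart d L (Ih d L k h U (hfop d L A)) = 0"
proof (intro ext)
  fix S T
  show "diagpart d L (Ih d L k h U (hfop d L A)) S T = 0 S T"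
  proof (cases "Ih d L k h U (hfop d L A) S T = 0")
    case False
    note s = Ih_supp[OF False]
    then show ?thesis unfolding diagpart_def grade_entry using Dk[OF hypD] k0 by force
  qed (simp add: diagpart_def grade_entry)
qed

lemma conj_off: "offpart d L (Ih d L k h U (hfop d L A)) = Ih d L k h U (hfop d L A)"
proof (intro ext)
  fix S T
  let ?I = "Ih d L k h U (hfop d L A)"
  let ?K = "{a - b | a b. a \<in> Dspec d L \<and> b \<in> Dspec d L} - {0}"
  have fK: "finite ?K"
  proof -
    have "{a - b | a b. a \<in> Dspec d L \<and> b \<in> Dspec d L} = (\<lambda>(a,b). a - b) ` (Dspec d L \<times> Dspec d L)"
      by auto
    then show ?thesis using finite_Dspec by simp
  qed
  have "offpart d L ?I S T = (\<Sum>k'\<in>?K. if k' = int (dcount d L S) - int (dcount d L T) then ?I S T else 0)"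
    unfolding offpart_def sum_op_apply grade_entry
    by (intro sum.cong refl) (auto dest: Ih_supp)
  also have "\<dots> = ?I S T"
  proof (cases "?I S T = 0")
    case False
    note s = Ih_supp[OF False]
    have "int (dcount d L S) - int (dcount d L T) \<in> ?K"
      using Dk[OF hypD] s k0 dcount_Dspec[of S d L] dcount_Dspec[of T d L] by auto
    then show ?thesis using fK by (simp add: sum.delta')
  next
    case True
    have "(\<Sum>k'\<in>?K. if k' = int (dcount d L S) - int (dcount d L T) then ?I S T else 0) = 0"
      by (rule sum.neutral) (simp add: True)
    then show ?thesis using True by simp
  qed
  finally show "offpart d L ?I S T = ?I S T" .
qed

lemma conj_v: "Ih d L (- k) h U (hfop d L (adj A)) = - adj (Ih d L k h U (hfop d L A))"
proof (intro ext)
  fix S T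
  have hb': "\<bar>h\<bar> * real (card X) < real_of_int \<bar>- k\<bar> * U" using hb by simp
  have k0': "- k \<noteq> 0" using k0 by simp
  have dd: "den d L (- k) h U S T = - den d L k h U T S" unfolding den_def by (simp add: algebra_simps)
  show "Ih d L (- k) h U (hfop d L (adj A)) S T = (- adj (Ih d L k h U (hfop d L A))) S T"
    apply (subst Ih_entry[OF loc_adj[OF lA] XL k0' U0 hb'])
    apply (simp add: adj_def IhE dd)
    done
qed

end



definition MX :: "nat \<Rightarrow> nat \<Rightarrow> site set \<Rightarrow> op" where
  "MX d L X = (\<Sum>x\<in>X. opscale (eta x / 2) (nop d L (x, True) - nop d L (x, False)))"

lemma alg_zero: "(0::op) \<in> alg d L X"
proof -
  have "(0::op) = opscale 0 (idop (cfgs d L))" by (intro ext) (simp add: opscale_def)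
  then show ?thesis using alg.unit alg.scale by metis
qed

lemma alg_diff: "A \<in> alg d L X \<Longrightarrow> B \<in> alg d L X \<Longrightarrow> A - B \<in> alg d L X"
proof -
  assume a: "A \<in> alg d L X" "B \<in> alg d L X"
  have "A - B = A + opscale (-1) B" by (intro ext) (simp add: opscale_def)
  then show ?thesis using a alg.add alg.scale by metis
qed

lemma alg_sum: "(\<And>x. x \<in> Y \<Longrightarrow> f x \<in> alg d L X) \<Longrightarrow> (\<Sum>x\<in>Y. f x) \<in> alg d L X"
  by (induction Y rule: infinite_finite_induct) (auto simp: alg_zero intro: alg.add)

lemma MX_alg: "MX d L X \<in> alg d L X"
  unfolding MX_def nop_def
  by (intro alg_sum alg.scale alg_diff alg.mult alg.gen_c alg.gen_cstar)

lemma MX_eq: "X \<subseteq> Lam d L \<Longrightarrow> MX d L X = diagop (cfgs d L) (\<lambda>S. of_real (mur X S))"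
proof (intro ext)
  fix S T assume XL: "X \<subseteq> Lam d L"
  have "MX d L X S T = (\<Sum>x\<in>X. diagop (cfgs d L) (\<lambda>S. 
       of_real ((-1) ^ sum_list x / 2 * ((if (x,True)\<in>S then 1 else 0) - (if (x,False)\<in>S then 1 else 0)))) S T)"
    unfolding MX_def sum_op_apply nop_eq
    by (intro sum.cong refl) (use XL in \<open>auto simp: opscale_def diagop_def eta_def\<close>)
  also have "\<dots> = diagop (cfgs d L) (\<lambda>S. of_real (mur X S)) S T"
    unfolding diagop_def mur_def by (cases "S = T"; cases "S \<in> cfgs d L") simp_all
  finally show "MX d L X S T = diagop (cfgs d L) (\<lambda>S. of_real (mur X S)) S T" .
qed

definition PP :: "nat \<Rightarrow> nat \<Rightarrow> site set \<Rightarrow> (real \<Rightarrow> complex) \<Rightarrow> bool" where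
  "PP d L X g = (\<forall>B\<in>alg d L X. (\<lambda>S T. g (mur X S - mur X T) * B S T) \<in> alg d L X)"

lemma PP_const: "PP d L X (\<lambda>z. c)"
  unfolding PP_def
proof
  fix B assume "B \<in> alg d L X"
  moreover have "(\<lambda>S T. c * B S T) = opscale c B" by (intro ext) (simp add: opscale_def)
  ultimately show "(\<lambda>S T. c * B S T) \<in> alg d L X" using alg.scale by metis
qed

lemma PP_id: "X \<subseteq> Lam d L \<Longrightarrow> PP d L X (\<lambda>z. of_real z)"
  unfolding PP_def
proof
  fix B assume XL: "X \<subseteq> Lam d L" and B: "B \<in> alg d L X"
  have lB: "loc d L X B" by (rule alg_loc[OF B])
  have "(\<lambda>S T. complex_of_real (mur X S - mur X T) * B S T) = ad (cfgs d L) (MX d L X) B"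
  proof (intro ext)
    fix S T
    show "complex_of_real (mur X S - mur X T) * B S T = ad (cfgs d L) (MX d L X) B S T"
      unfolding MX_eq[OF XL] ad_diag[OF finite_cfgs order_refl]
      using lB unfolding loc_def by (cases "B S T = 0") auto
  qed
  moreover have "ad (cfgs d L) (MX d L X) B \<in> alg d L X"
    unfolding ad_def by (intro alg_diff alg.mult MX_alg B)
  ultimately show "(\<lambda>S T. complex_of_real (mur X S - mur X T) * B S T) \<in> alg d L X" by simp
qed

lemma PP_add: "PP d L X f \<Longrightarrow> PP d L X g \<Longrightarrow> PP d L X (\<lambda>z. f z + g z)"
  unfolding PP_def
proof
  fix B assume f: "\<forall>B\<in>alg d L X. (\<lambda>S T. f (mur X S - mur X T) * B S T) \<in> alg d L X"
    and g: "\<forall>B\<in>alg d L X. (\<lambda>S T. g (mur X S - mur X T) * B S T) \<in> alg d L X"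
    and B: "B \<in> alg d L X"
  have "(\<lambda>S T. f (mur X S - mur X T) * B S T) + (\<lambda>S T. g (mur X S - mur X T) * B S T) \<in> alg d L X"
    by (rule alg.add[OF bspec[OF f B] bspec[OF g B]])
  moreover have "(\<lambda>S T. f (mur X S - mur X T) * B S T) + (\<lambda>S T. g (mur X S - mur X T) * B S T) =
     (\<lambda>S T. (f (mur X S - mur X T) + g (mur X S - mur X T)) * B S T)"
    by (intro ext) (simp add: algebra_simps)
  ultimately show "(\<lambda>S T. (f (mur X S - mur X T) + g (mur X S - mur X T)) * B S T) \<in> alg d L X"
    by (simp only:)
qed

lemma PP_mult: "PP d L X f \<Longrightarrow> PP d L X g \<Longrightarrow> PP d L X (\<lambda>z. f z * g z)"
  unfolding PP_def
proof
  fix B assume f: "\<forall>B\<in>alg d L X. (\<lambda>S T. f (mur X S - mur X T) * B S T) \<in> alg d L X"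
    and g: "\<forall>B\<in>alg d L X. (\<lambda>S T. g (mur X S - mur X T) * B S T) \<in> alg d L X"
    and B: "B \<in> alg d L X"
  have gB: "(\<lambda>S T. g (mur X S - mur X T) * B S T) \<in> alg d L X" by (rule bspec[OF g B])
  have "(\<lambda>S T. f (mur X S - mur X T) * (g (mur X S - mur X T) * B S T)) \<in> alg d L X"
    using bspec[OF f gB] by simp
  then show "(\<lambda>S T. (f (mur X S - mur X T) * g (mur X S - mur X T)) * B S T) \<in> alg d L X"
    by (simp add: mult.assoc)
qed

lemma PP_sum: "(\<And>a. a \<in> Y \<Longrightarrow> PP d L X (F a)) \<Longrightarrow> PP d L X (\<lambda>z. \<Sum>a\<in>Y. F a z)"
proof (induction Y rule: infinite_finite_induct)
  case (infinite A)
  then show ?case using PP_const[of d L X 0] by simp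
next
  case empty
  then show ?case using PP_const[of d L X 0] by simp
next
  case (insert x F)
  then show ?case by (simp add: PP_add)
qed

lemma PP_prod: "(\<And>a. a \<in> Y \<Longrightarrow> PP d L X (F a)) \<Longrightarrow> PP d L X (\<lambda>z. \<Prod>a\<in>Y. F a z)"
proof (induction Y rule: infinite_finite_induct)
  case (infinite A)
  then show ?case using PP_const[of d L X 1] by simp
next
  case empty
  then show ?case using PP_const[of d L X 1] by simp
next
  case (insert x F)
  then show ?case by (simp add: PP_mult)
qed

lemma interp:
  fixes f :: "real \<Rightarrow> complex"
  assumes "finite Lm" "X \<subseteq> Lam d L"
  shows "\<exists>g. PP d L X g \<and> (\<forall>z\<in>Lm. g z = f z)"
proof -
  define g where "g = (\<lambda>z. \<Sum>a\<in>Lm. f a * (\<Prod>b\<in>Lm - {a}. (complex_of_real z - of_real b) / of_real (a - b)))"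
  have "PP d L X g"
    unfolding g_def
  proof (intro PP_sum PP_mult PP_const PP_prod)
    fix a b
    have e: "(\<lambda>z. (complex_of_real z - of_real b) / of_real (a - b)) =
       (\<lambda>z. of_real z * (1 / of_real (a - b)) + (- of_real b / of_real (a - b)))"
      by (intro ext) (simp add: diff_divide_distrib)
    have "PP d L X (\<lambda>z. of_real z * (1 / of_real (a - b)) + (- of_real b / of_real (a - b)))"
      by (rule PP_add[OF PP_mult[OF PP_id[OF assms(2)] PP_const] PP_const])
    then show "PP d L X (\<lambda>z. (complex_of_real z - of_real b) / of_real (a - b))"
      by (subst e)
  qed
  moreover have "\<forall>z\<in>Lm. g z = f z"
  proof
    fix z assume z: "z \<in> Lm"
    have "g z = (\<Sum>a\<in>Lm. if a = z then f z else 0)"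
      unfolding g_def
    proof (intro sum.cong refl)
      fix a assume a: "a \<in> Lm"
      show "f a * (\<Prod>b\<in>Lm - {a}. (complex_of_real z - of_real b) / of_real (a - b)) = (if a = z then f z else 0)"
      proof (cases "a = z")
        case True
        have "(\<Prod>b\<in>Lm - {a}. (complex_of_real z - of_real b) / of_real (a - b)) = (\<Prod>b\<in>Lm - {a}. 1)"
          using True by (intro prod.cong refl) (auto simp: divide_self)
        then show ?thesis using True by simp
      next
        case False
        have "(\<Prod>b\<in>Lm - {a}. (complex_of_real z - of_real b) / of_real (a - b)) = 0"
          using False z assms(1) by (intro prod_zero) auto
        then show ?thesis using False by simp
      qed
    qed
    also have "\<dots> = f z" using z assms(1) by (simp add: sum.delta')
    finally show "g z = f z" .
  qed
  ultimately show ?thesis by blast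
qed

lemma conj_iii:
  assumes XL: "X \<subseteq> Lam d L" and A: "A \<in> alg d L X" and k0: "k \<noteq> 0" and U0: "U > 0"
    and hb: "\<bar>h\<bar> * real (card X) < real_of_int \<bar>k\<bar> * U"
  shows "\<exists>B\<in>alg d L X. hfop d L B = Ih d L k h U (hfop d L A)"
proof -
  have lA: "loc d L X A" by (rule alg_loc[OF A])
  define Lm where "Lm = (\<lambda>(S,T). mur X S - mur X T) ` (cfgs d L \<times> cfgs d L)"
  have fL: "finite Lm" unfolding Lm_def using finite_cfgs by simp
  obtain g where g: "PP d L X g" "\<forall>z\<in>Lm. g z = 1 / complex_of_real (real_of_int k * U - h * z)"
    using interp[OF fL XL, of "\<lambda>z. 1 / complex_of_real (real_of_int k * U - h * z)"] by blast
  define B where "B = (\<lambda>S T. g (mur X S - mur X T) * A S T)"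
  have "B \<in> alg d L X" using g(1) A unfolding PP_def B_def by blast
  moreover have "hfop d L B = Ih d L k h U (hfop d L A)"
  proof (intro ext)
    fix S T
    show "hfop d L B S T = Ih d L k h U (hfop d L A) S T"
      unfolding Ih_entry[OF lA XL k0 U0 hb]
    proof (cases "A S T = 0")
      case False
      then have c: "S \<in> cfgs d L" "T \<in> cfgs d L" using lA unfolding loc_def by auto
      then have "mur X S - mur X T \<in> Lm" unfolding Lm_def by auto
      then have "g (mur X S - mur X T) = 1 / complex_of_real (den d L k h U S T)"
        using g(2) loc_Delta(2)[OF lA XL False] unfolding den_def by simp
      then show "hfop d L B S T = (if S \<in> hfcfgs d L \<and> T \<in> hfcfgs d L then A S T / complex_of_real (den d L k h U S T) else 0)"
        unfolding hfop_def B_def by simp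
    qed (simp add: hfop_def B_def)
  qed
  ultimately show ?thesis by blast
qed



definition vn :: "cfg set \<Rightarrow> (cfg \<Rightarrow> complex) \<Rightarrow> real" where
  "vn V w = L2_set (\<lambda>S. cmod (w S)) V"

definition app :: "cfg set \<Rightarrow> op \<Rightarrow> (cfg \<Rightarrow> complex) \<Rightarrow> cfg \<Rightarrow> complex" where
  "app V B v = (\<lambda>S. \<Sum>T\<in>V. B S T * v T)"

lemma opnorm_alt: "opnorm V B = Sup ((\<lambda>v. vn V (app V B v)) ` {v. vn V v \<le> 1})"
  unfolding opnorm_def vn_def app_def L2_set_def by simp

lemma vn_nonneg: "0 \<le> vn V w" unfolding vn_def by simp

lemma vn_cong: "(\<And>S. S \<in> V \<Longrightarrow> a S = b S) \<Longrightarrow> vn V a = vn V b"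
  unfolding vn_def by (intro L2_set_cong) auto

lemma vn_scale: "vn V (\<lambda>S. c * w S) = cmod c * vn V w"
  unfolding vn_def by (simp add: L2_set_right_distrib norm_mult)

lemma vn_mult_le:
  assumes "0 \<le> c" "\<And>S. S \<in> V \<Longrightarrow> cmod (g S) \<le> c"
  shows "vn V (\<lambda>S. g S * w S) \<le> c * vn V w"
  unfolding vn_def L2_set_right_distrib[OF assms(1)]
  by (intro L2_set_mono) (auto simp: norm_mult intro: mult_right_mono assms(2))

lemma vn_add: "vn V (\<lambda>S. a S + b S) \<le> vn V a + vn V b"
proof -
  have "vn V (\<lambda>S. a S + b S) \<le> L2_set (\<lambda>S. cmod (a S) + cmod (b S)) V"
    unfolding vn_def by (intro L2_set_mono norm_triangle_ineq) auto
  also have "\<dots> \<le> vn V a + vn V b" unfolding vn_def by (rule L2_set_triangle_ineq)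
  finally show ?thesis .
qed

lemma vn_le1: "finite V \<Longrightarrow> vn V v \<le> 1 \<Longrightarrow> T \<in> V \<Longrightarrow> cmod (v T) \<le> 1"
  unfolding vn_def using member_le_L2_set[of V T "\<lambda>S. cmod (v S)"] by simp

lemma opnorm_bdd:
  assumes "finite V"
  shows "bdd_above ((\<lambda>v. vn V (app V B v)) ` {v. vn V v \<le> 1})"
proof (rule bdd_aboveI2)
  fix v assume v: "v \<in> {v. vn V v \<le> 1}"
  show "vn V (app V B v) \<le> L2_set (\<lambda>S. \<Sum>T\<in>V. cmod (B S T)) V"
    unfolding vn_def
  proof (intro L2_set_mono)
    fix S assume "S \<in> V"
    have "cmod (app V B v S) \<le> (\<Sum>T\<in>V. cmod (B S T * v T))" unfolding app_def by (rule norm_sum)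
    also have "\<dots> \<le> (\<Sum>T\<in>V. cmod (B S T))"
    proof (intro sum_mono)
      fix T assume "T \<in> V"
      then have "cmod (v T) \<le> 1" using vn_le1[OF assms] v by auto
      then show "cmod (B S T * v T) \<le> cmod (B S T)"
        by (simp add: norm_mult mult_left_le)
    qed
    finally show "cmod (app V B v S) \<le> (\<Sum>T\<in>V. cmod (B S T))" .
  qed simp
qed

lemma opnorm_ub: "finite V \<Longrightarrow> vn V v \<le> 1 \<Longrightarrow> vn V (app V B v) \<le> opnorm V B"
  unfolding opnorm_alt by (rule cSup_upper[OF _ opnorm_bdd]) auto

lemma vn_zero: "vn V (\<lambda>S. 0) = 0" unfolding vn_def by (simp add: L2_set_0')

lemma opnorm_nonneg: "finite V \<Longrightarrow> 0 \<le> opnorm V B"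
proof -
  assume f: "finite V"
  have "vn V (app V B (\<lambda>S. 0)) = 0" unfolding app_def by (simp add: vn_zero)
  moreover have "vn V (app V B (\<lambda>S. 0)) \<le> opnorm V B" by (rule opnorm_ub[OF f]) (simp add: vn_zero)
  ultimately show ?thesis by simp
qed

lemma opnorm_le:
  assumes "\<And>v. vn V v \<le> 1 \<Longrightarrow> vn V (app V B v) \<le> c"
  shows "opnorm V B \<le> c"
proof -
  have "(\<lambda>S. 0) \<in> {v. vn V v \<le> 1}" by (simp add: vn_zero)
  then show ?thesis unfolding opnorm_alt by (intro cSup_least) (auto intro: assms)
qed

lemma opnorm_apply:
  assumes f: "finite V"
  shows "vn V (app V B v) \<le> opnorm V B * vn V v"
proof (cases "vn V v = 0")
  case True
  then have "\<forall>T\<in>V. v T = 0" unfolding vn_def using L2_set_eq_0_iff[OF f] by auto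
  then have "vn V (app V B v) = 0" unfolding app_def by (simp add: vn_zero)
  then show ?thesis using True by simp
next
  case False
  let ?n = "vn V v"
  have np: "?n > 0" using False vn_nonneg[of V v] by linarith
  define w where "w = (\<lambda>T. complex_of_real (1 / ?n) * v T)"
  have "vn V w = 1" unfolding w_def vn_scale using np by (simp add: norm_divide)
  then have "vn V (app V B w) \<le> opnorm V B" using opnorm_ub[OF f] by simp
  moreover have aw: "app V B w = (\<lambda>S. complex_of_real (1 / ?n) * app V B v S)"
    unfolding w_def app_def by (intro ext) (simp add: sum_distrib_left algebra_simps)
  have "vn V (app V B w) = vn V (app V B v) / ?n"
    by (simp only: aw vn_scale) (use np in \<open>simp add: norm_divide\<close>)
  ultimately show ?thesis using np by (simp add: divide_simps)
qed

lemma opnorm_scale: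
  assumes f: "finite V"
  shows "opnorm V (opscale c B) \<le> cmod c * opnorm V B"
proof (rule opnorm_le)
  fix v assume v: "vn V v \<le> 1"
  have "app V (opscale c B) v = (\<lambda>S. c * app V B v S)"
    unfolding app_def opscale_def by (intro ext) (simp add: sum_distrib_left algebra_simps)
  then have "vn V (app V (opscale c B) v) = cmod c * vn V (app V B v)" by (simp add: vn_scale)
  also have "\<dots> \<le> cmod c * opnorm V B" by (intro mult_left_mono opnorm_ub[OF f v]) simp
  finally show "vn V (app V (opscale c B) v) \<le> cmod c * opnorm V B" .
qed

lemma comm_bound:
  fixes g :: "cfg \<Rightarrow> real"
  assumes f: "finite V" and c: "0 \<le> c" and gb: "\<And>S. \<bar>g S\<bar> \<le> c"
    and e: "\<And>S T. S \<in> V \<Longrightarrow> T \<in> V \<Longrightarrow> B' S T = of_real (g S - g T) * B S T"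
  shows "opnorm V B' \<le> 2 * c * opnorm V B"
proof (rule opnorm_le)
  fix v assume v: "vn V v \<le> 1"
  let ?gv = "\<lambda>T. complex_of_real (g T) * v T"
  have "vn V (app V B' v) = vn V (\<lambda>S. complex_of_real (g S) * app V B v S + (- app V B ?gv S))"
  proof (rule vn_cong)
    fix S assume S: "S \<in> V"
    have "app V B' v S = (\<Sum>T\<in>V. complex_of_real (g S) * (B S T * v T) - B S T * ?gv T)"
      unfolding app_def using S by (intro sum.cong refl) (simp add: e algebra_simps)
    also have "\<dots> = complex_of_real (g S) * app V B v S + (- app V B ?gv S)"
      unfolding app_def by (simp add: sum_subtractf sum_distrib_left)
    finally show "app V B' v S = complex_of_real (g S) * app V B v S + (- app V B ?gv S)" .
  qed
  also have "\<dots> \<le> vn V (\<lambda>S. complex_of_real (g S) * app V B v S) + vn V (\<lambda>S. - app V B ?gv S)"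
    by (rule vn_add)
  also have "vn V (\<lambda>S. - app V B ?gv S) = vn V (app V B ?gv)"
    unfolding vn_def by simp
  finally have a: "vn V (app V B' v) \<le> vn V (\<lambda>S. complex_of_real (g S) * app V B v S) + vn V (app V B ?gv)" .
  have "vn V (\<lambda>S. complex_of_real (g S) * app V B v S) \<le> c * vn V (app V B v)"
    by (rule vn_mult_le[OF c]) (simp add: gb)
  also have "\<dots> \<le> c * opnorm V B" by (intro mult_left_mono opnorm_ub[OF f v] c)
  finally have b: "vn V (\<lambda>S. complex_of_real (g S) * app V B v S) \<le> c * opnorm V B" .
  have "vn V ?gv \<le> c * vn V v" by (rule vn_mult_le[OF c]) (simp add: gb)
  also have "\<dots> \<le> c" using v c by (simp add: mult_left_le)
  finally have "vn V ?gv \<le> c" .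
  then have "opnorm V B * vn V ?gv \<le> opnorm V B * c" by (intro mult_left_mono opnorm_nonneg[OF f])
  then have c1: "vn V (app V B ?gv) \<le> opnorm V B * c" using opnorm_apply[OF f, of B ?gv] by linarith
  show "vn V (app V B' v) \<le> 2 * c * opnorm V B" using a b c1 by (simp add: algebra_simps)
qed



context
  fixes d L :: nat and X :: "site set" and h U :: real and k :: int and A :: op
  assumes XL: "X \<subseteq> Lam d L" and k0: "k \<noteq> 0" and U0: "U > 0" and lA: "loc d L X A"
    and hb: "\<bar>h\<bar> * real (card X) < real_of_int \<bar>k\<bar> * U"
begin

abbreviation "HF \<equiv> hfcfgs d L"
abbreviation "Bn n \<equiv> (ad (cfgs d L) (hfop d L (Mop d L)) ^^ n) (hfop d L A)"

lemma fX: "finite X" using XL finite_Lam finite_subset by blast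

lemma Bn_entry: "S \<in> HF \<Longrightarrow> T \<in> HF \<Longrightarrow> Bn n S T = of_real (mur (Lam d L) S - mur (Lam d L) T) ^ n * A S T"
  unfolding hfM ad_diag_pow[OF finite_cfgs hf_sub] by (simp add: hfop_def)

lemma Bn_step: "opnorm HF (Bn (Suc n)) \<le> real (card X) * opnorm HF (Bn n)"
proof -
  have "opnorm HF (Bn (Suc n)) \<le> 2 * (real (card X) / 2) * opnorm HF (Bn n)"
  proof (rule comm_bound[OF finite_hf _ mur_bound[OF fX]])
    fix S T assume S: "S \<in> HF" and T: "T \<in> HF"
    show "Bn (Suc n) S T = of_real (mur X S - mur X T) * Bn n S T"
    proof (cases "A S T = 0")
      case False
      then show ?thesis unfolding Bn_entry[OF S T] using loc_Delta(2)[OF lA XL False] by simp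
    qed (unfold Bn_entry[OF S T], simp)
  qed simp
  then show ?thesis by simp
qed

lemma Bn_bound: "opnorm HF (Bn n) \<le> real (card X) ^ n * opnorm HF (hfop d L A)"
proof (induction n)
  case 0
  then show ?case by simp
next
  case (Suc n)
  have "opnorm HF (Bn (Suc n)) \<le> real (card X) * opnorm HF (Bn n)" by (rule Bn_step)
  also have "\<dots> \<le> real (card X) * (real (card X) ^ n * opnorm HF (hfop d L A))"
    by (intro mult_left_mono Suc.IH) simp
  finally show ?case by (simp add: algebra_simps)
qed

lemma Iterm_bound: "opnorm HF (Iterm d L k h U (hfop d L A) n)
   \<le> opnorm HF (hfop d L A) / \<bar>real_of_int k * U\<bar> * (\<bar>h\<bar> * real (card X) / \<bar>real_of_int k * U\<bar>) ^ n"
proof -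
  have "opnorm HF (Iterm d L k h U (hfop d L A) n) \<le>
     cmod (complex_of_real (1 / (real_of_int k * U) * (h / (real_of_int k * U)) ^ n)) * opnorm HF (Bn n)"
    unfolding Iterm_def by (rule opnorm_scale[OF finite_hf])
  also have "\<dots> \<le> cmod (complex_of_real (1 / (real_of_int k * U) * (h / (real_of_int k * U)) ^ n)) *
      (real (card X) ^ n * opnorm HF (hfop d L A))"
    by (intro mult_left_mono Bn_bound) simp
  also have "\<dots> = opnorm HF (hfop d L A) / \<bar>real_of_int k * U\<bar> * (\<bar>h\<bar> * real (card X) / \<bar>real_of_int k * U\<bar>) ^ n"
    by (simp only: norm_of_real) (simp add: abs_mult power_abs power_divide power_mult_distrib)
  finally show ?thesis .
qed

lemma conj_summable: "summable (\<lambda>n. opnorm HF (Iterm d L k h U (hfop d L A) n))"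
proof (rule summable_comparison_test)
  have r: "\<bar>\<bar>h\<bar> * real (card X) / \<bar>real_of_int k * U\<bar>\<bar> < 1"
    using hb U0 k0 by (simp add: abs_mult divide_simps)
  show "summable (\<lambda>n. opnorm HF (hfop d L A) / \<bar>real_of_int k * U\<bar> * (\<bar>h\<bar> * real (card X) / \<bar>real_of_int k * U\<bar>) ^ n)"
    by (intro summable_mult summable_geometric) (use r in simp)
  show "\<exists>N. \<forall>n\<ge>N. norm (opnorm HF (Iterm d L k h U (hfop d L A) n))
     \<le> opnorm HF (hfop d L A) / \<bar>real_of_int k * U\<bar> * (\<bar>h\<bar> * real (card X) / \<bar>real_of_int k * U\<bar>) ^ n"
    using Iterm_bound opnorm_nonneg[OF finite_hf] by auto
qed

lemma conj_norm: "opnorm HF (Ih d L k h U (hfop d L A))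
          \<le> opnorm HF (hfop d L A) / (real_of_int \<bar>k\<bar> * U - \<bar>h\<bar> * real (card X))"
proof -
  let ?I = "Ih d L k h U (hfop d L A)"
  let ?A = "hfop d L A"
  define E where "E = (\<lambda>S T. complex_of_real (mur X S - mur X T) * ?I S T)"
  have IhE: "?I S T = (if S \<in> HF \<and> T \<in> HF then A S T / of_real (den d L k h U S T) else 0)" for S T
    by (rule Ih_entry[OF lA XL k0 U0 hb])
  have E_bound: "opnorm HF E \<le> 2 * (real (card X) / 2) * opnorm HF ?I"
    by (rule comm_bound[OF finite_hf _ mur_bound[OF fX]]) (auto simp: E_def)
  have key: "of_real (real_of_int k * U) * ?I S T = ?A S T + of_real h * E S T"
    if S: "S \<in> HF" and T: "T \<in> HF" for S T
  proof (cases "A S T = 0")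
    case True
    then show ?thesis unfolding E_def IhE using S T by (simp add: hfop_def)
  next
    case False
    have dn: "den d L k h U S T \<noteq> 0"
      using den_bound[OF lA XL False hb U0] unfolding den_def by auto
    have dX: "mur (Lam d L) S - mur (Lam d L) T = mur X S - mur X T" by (rule loc_Delta(2)[OF lA XL False])
    have "of_real (real_of_int k * U) * ?I S T - of_real h * E S T = of_real (den d L k h U S T) * ?I S T"
      unfolding E_def den_def dX by (simp add: algebra_simps)
    also have "\<dots> = ?A S T" unfolding IhE using S T dn by (simp add: hfop_def)
    finally show ?thesis by (simp add: algebra_simps)
  qed
  let ?K = "real_of_int \<bar>k\<bar> * U"
  have Kp: "?K > 0" using k0 U0 by simp
  have "opnorm HF ?I \<le> (opnorm HF ?A + \<bar>h\<bar> * (real (card X) * opnorm HF ?I)) / ?K"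
  proof (rule opnorm_le)
    fix v assume v: "vn HF v \<le> 1"
    have "?K * vn HF (app HF ?I v) = vn HF (\<lambda>S. of_real (real_of_int k * U) * app HF ?I v S)"
      by (simp only: vn_scale norm_of_real) (use U0 in \<open>simp add: abs_mult\<close>)
    also have "\<dots> = vn HF (\<lambda>S. app HF ?A v S + of_real h * app HF E v S)"
    proof (rule vn_cong)
      fix S assume S: "S \<in> HF"
      show "of_real (real_of_int k * U) * app HF ?I v S = app HF ?A v S + of_real h * app HF E v S"
        unfolding app_def sum_distrib_left sum.distrib[symmetric]
      proof (intro sum.cong refl)
        fix T assume T: "T \<in> HF"
        have "of_real (real_of_int k * U) * (?I S T * v T) = (of_real (real_of_int k * U) * ?I S T) * v T"
          by (simp only: mult.assoc)
        also have "\<dots> = (?A S T + of_real h * E S T) * v T" by (simp only: key[OF S T])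
        also have "\<dots> = ?A S T * v T + of_real h * (E S T * v T)" by (simp only: distrib_right mult.assoc)
        finally show "of_real (real_of_int k * U) * (?I S T * v T) = ?A S T * v T + of_real h * (E S T * v T)" .
      qed
    qed
    also have "\<dots> \<le> vn HF (app HF ?A v) + vn HF (\<lambda>S. of_real h * app HF E v S)" by (rule vn_add)
    also have "\<dots> = vn HF (app HF ?A v) + \<bar>h\<bar> * vn HF (app HF E v)" by (simp add: vn_scale)
    also have "\<dots> \<le> opnorm HF ?A + \<bar>h\<bar> * opnorm HF E"
      by (intro add_mono mult_left_mono opnorm_ub[OF finite_hf v]) simp_all
    also have "\<dots> \<le> opnorm HF ?A + \<bar>h\<bar> * (real (card X) * opnorm HF ?I)"
      using E_bound by (intro add_left_mono mult_left_mono) simp_all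
    finally show "vn HF (app HF ?I v) \<le> (opnorm HF ?A + \<bar>h\<bar> * (real (card X) * opnorm HF ?I)) / ?K"
      using Kp by (simp add: field_simps)
  qed
  then have "opnorm HF ?I * ?K \<le> opnorm HF ?A + \<bar>h\<bar> * real (card X) * opnorm HF ?I"
    using Kp by (simp add: field_simps)
  then have "opnorm HF ?I * (?K - \<bar>h\<bar> * real (card X)) \<le> opnorm HF ?A"
    by (simp add: algebra_simps)
  moreover have "?K - \<bar>h\<bar> * real (card X) > 0" using hb by simp
  ultimately show ?thesis by (simp add: field_simps)
qed

end


theorem lemmaA2:
  fixes d L :: nat and X :: "site set" and h0 h U :: real and k :: int and A :: op
  assumes "1 \<le> d" and "even L" and "0 < L"
    and "X \<subseteq> Lam d L"
    and "h0 > 0" and "\<bar>h\<bar> \<le> h0" and "U > 0" and "k \<noteq> 0"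
    and "A \<in> alg d L X"
    and "grade d L k (hfop d L A) = hfop d L A"
    and "ad (cfgs d L) (hfop d L (Dop d L)) (hfop d L A) = opscale (of_int k) (hfop d L A)"
    and "real_of_int \<bar>k\<bar> * U > h0 * real (card X)"
  shows "summable (\<lambda>n. opnorm (hfcfgs d L) (Iterm d L k h U (hfop d L A) n))
    \<and> ad (cfgs d L) (opscale (of_real U) (hfop d L (Dop d L)) - opscale (of_real h) (hfop d L (Mop d L)))
          (Ih d L k h U (hfop d L A)) = hfop d L A
    \<and> ad (cfgs d L) (hfop d L (Dop d L)) (Ih d L k h U (hfop d L A))
          = opscale (of_int k) (Ih d L k h U (hfop d L A))
    \<and> diagpart d L (Ih d L k h U (hfop d L A)) = 0
    \<and> offpart d L (Ih d L k h U (hfop d L A)) = Ih d L k h U (hfop d L A)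
    \<and> (\<exists>B\<in>alg d L X. hfop d L B = Ih d L k h U (hfop d L A))
    \<and> opnorm (hfcfgs d L) (Ih d L k h U (hfop d L A))
          \<le> opnorm (hfcfgs d L) (hfop d L A) / (real_of_int \<bar>k\<bar> * U - \<bar>h\<bar> * real (card X))
    \<and> opnorm (hfcfgs d L) (hfop d L A) / (real_of_int \<bar>k\<bar> * U - \<bar>h\<bar> * real (card X))
          \<le> opnorm (hfcfgs d L) (hfop d L A) / (real_of_int \<bar>k\<bar> * U - h0 * real (card X))
    \<and> Ih d L (- k) h U (hfop d L (adj A)) = - adj (Ih d L k h U (hfop d L A))"
proof -
  note XL = assms(4) and k0 = assms(8) and U0 = assms(7) and hypD = assms(11)
  have lA: "loc d L X A" by (rule alg_loc[OF assms(9)])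
  have "\<bar>h\<bar> * real (card X) \<le> h0 * real (card X)" using assms(6) by (intro mult_right_mono) simp_all
  then have hb: "\<bar>h\<bar> * real (card X) < real_of_int \<bar>k\<bar> * U" using assms(12) by linarith
  have n0: "0 \<le> opnorm (hfcfgs d L) (hfop d L A)" by (rule opnorm_nonneg[OF finite_hf])
  have last: "opnorm (hfcfgs d L) (hfop d L A) / (real_of_int \<bar>k\<bar> * U - \<bar>h\<bar> * real (card X))
          \<le> opnorm (hfcfgs d L) (hfop d L A) / (real_of_int \<bar>k\<bar> * U - h0 * real (card X))"
  proof (rule divide_left_mono[OF _ n0])
    show "real_of_int \<bar>k\<bar> * U - h0 * real (card X) \<le> real_of_int \<bar>k\<bar> * U - \<bar>h\<bar> * real (card X)"
      using \<open>\<bar>h\<bar> * real (card X) \<le> h0 * real (card X)\<close> by linarith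
    show "0 < (real_of_int \<bar>k\<bar> * U - \<bar>h\<bar> * real (card X)) * (real_of_int \<bar>k\<bar> * U - h0 * real (card X))"
      using hb assms(12) by (intro mult_pos_pos) simp_all
  qed
  show ?thesis
    using conj_summable[OF XL k0 U0 lA hb] conj_i[OF XL k0 U0 lA hypD hb] conj_ii[OF XL k0 U0 lA hypD hb]
      conj_diag[OF XL k0 U0 lA hypD hb] conj_off[OF XL k0 U0 lA hypD hb]
      conj_iii[OF XL assms(9) k0 U0 hb] conj_norm[OF XL k0 U0 lA hb] last
      conj_v[OF XL k0 U0 lA hypD hb]
    by blast
qed

end
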